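(* Let $\kappa$ be the critical scale and $S=S_\kappa$ the output of algorithm StochKnap (any parameter $C>0$). If $\mathcal A$ is any adaptive policy that selects items only from $N\setminus S$ and has cost at most $B$, then $\Pr[R(\mathcal A)<\kappa]\ge1-\epsilon$. In particular, for every adaptive policy on $N$ of cost at most $B$ selecting the random set $O$, $\Pr[R(O\setminus S)\ge\kappa]\le\epsilon$.
   Context: Algorithm StochKnap$(N,c,R,B,\epsilon)$ with parameter $C>0$: $N$ is a finite set of items, item $i$ has cost $c(i)>0$ and a nonnegative random reward $R(i)$, rewards independent; $W\ge1$ is an integer with $\sum_{i\in N}\mathbb E[R(i)]\le W$; $B>0$, $\epsilon\in(0,1)$. Let $T=\{i\in N: c(i)\le B\}$ and $D=CB$. For $\tau>0$ let $r_\tau(i)=\mathbb E[\min\{R(i)/\tau,1\}]$. Order $T$ as $i_1,i_2,\ldots$ with $r_\tau(i_j)/c(i_j)$ nonincreasing. If $c(T)\ge D$, let $t$ be the smallest index with $\sum_{j\le t}c(i_j)\ge D$, set $S_\tau=\{i_1,\ldots,i_t\}$ and slope $s_\tau=r_\tau(i_t)/c(i_t)$; otherwise $S_\tau=T$, $s_\tau=0$. Scale $\tau$ is rich if $s_\tau>\epsilon/B$, poor otherwise. Scales $\mathcal G=\{2^\ell:\ell\in\mathbb Z,0\le\ell\le\lceil\log_2W\rceil\}$; critical scale $\kappa$ = smallest poor scale in $\mathcal G$ (assumed to exist); output $S=S_\kappa$. For a set $I$, $R(I)=\sum_{i\in I}R(i)$. An adaptive policy sequentially selects distinct items, each choice possibly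 depending on previously observed rewards and internal randomness independent of unselected rewards; cost at most $B$ means the selected items always have total cost at most $B$; $R(\mathcal A)$ is the total reward of selected items. *)

theory Defs
  imports "HOL-Probability.Probability"
begin

definition rtau :: "'w measure \<Rightarrow> ('i \<Rightarrow> 'w \<Rightarrow> real) \<Rightarrow> real \<Rightarrow> 'i \<Rightarrow> real" where
  "rtau M R \<tau> i = (\<integral>\<omega>. min (R i \<omega> / \<tau>) 1 \<partial>M)"

definition Tset :: "'i set \<Rightarrow> ('i \<Rightarrow> real) \<Rightarrow> real \<Rightarrow> 'i set" where
  "Tset N c B = {i \<in> N. c i \<le> B}"

text \<open>A valid ordering of T at scale tau (0-based: sigma 0, sigma 1, ... are i_1, i_2, ...),
  with r_tau / c nonincreasing.\<close>
definition valid_order :: "'w measure \<Rightarrow> ('i \<Rightarrow> 'w \<Rightarrow> real) \<Rightarrow> 'i set \<Rightarrow> ('i \<Rightarrow> real) \<Rightarrow> real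
    \<Rightarrow> real \<Rightarrow> (nat \<Rightarrow> 'i) \<Rightarrow> bool" where
  "valid_order M R N c B \<tau> \<sigma> \<longleftrightarrow>
     bij_betw \<sigma> {..<card (Tset N c B)} (Tset N c B) \<and>
     (\<forall>j k. j \<le> k \<and> k < card (Tset N c B) \<longrightarrow>
        rtau M R \<tau> (\<sigma> k) / c (\<sigma> k) \<le> rtau M R \<tau> (\<sigma> j) / c (\<sigma> j))"

definition cutoff :: "('i \<Rightarrow> real) \<Rightarrow> (nat \<Rightarrow> 'i) \<Rightarrow> real \<Rightarrow> nat" where
  "cutoff c \<sigma> D = (LEAST t. (\<Sum>j<t. c (\<sigma> j)) \<ge> D)"

definition S_tau :: "'i set \<Rightarrow> ('i \<Rightarrow> real) \<Rightarrow> real \<Rightarrow> real \<Rightarrow> (nat \<Rightarrow> 'i) \<Rightarrow> 'i set" where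
  "S_tau N c B C \<sigma> =
     (if sum c (Tset N c B) \<ge> C * B then \<sigma> ` {..<cutoff c \<sigma> (C * B)} else Tset N c B)"

definition slope :: "'w measure \<Rightarrow> ('i \<Rightarrow> 'w \<Rightarrow> real) \<Rightarrow> 'i set \<Rightarrow> ('i \<Rightarrow> real) \<Rightarrow> real \<Rightarrow> real
    \<Rightarrow> real \<Rightarrow> (nat \<Rightarrow> 'i) \<Rightarrow> real" where
  "slope M R N c B C \<tau> \<sigma> =
     (if sum c (Tset N c B) \<ge> C * B then
        (let i = \<sigma> (cutoff c \<sigma> (C * B) - 1) in rtau M R \<tau> i / c i)
      else 0)"

definition poor :: "'w measure \<Rightarrow> ('i \<Rightarrow> 'w \<Rightarrow> real) \<Rightarrow> 'i set \<Rightarrow> ('i \<Rightarrow> real) \<Rightarrow> real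
    \<Rightarrow> real \<Rightarrow> real \<Rightarrow> real \<Rightarrow> (nat \<Rightarrow> 'i) \<Rightarrow> bool" where
  "poor M R N c B C \<epsilon> \<tau> \<sigma> \<longleftrightarrow> \<not> (slope M R N c B C \<tau> \<sigma> > \<epsilon> / B)"

definition scales :: "nat \<Rightarrow> real set" where
  "scales W = {(2::real) ^ l | l::nat. int l \<le> \<lceil>log 2 (real W)\<rceil>}"

definition crit_scale :: "'w measure \<Rightarrow> ('i \<Rightarrow> 'w \<Rightarrow> real) \<Rightarrow> 'i set \<Rightarrow> ('i \<Rightarrow> real) \<Rightarrow> nat
    \<Rightarrow> real \<Rightarrow> real \<Rightarrow> real \<Rightarrow> (real \<Rightarrow> nat \<Rightarrow> 'i) \<Rightarrow> real" where
  "crit_scale M R N c W B C \<epsilon> \<sigma> = Min {\<tau> \<in> scales W. poor M R N c B C \<epsilon> \<tau> (\<sigma> \<tau>)}"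

text \<open>A policy maps its internal random seed u and the history (list of selected items with
  their observed rewards) to the next item, or None to stop.  Selecting an already selected
  item also stops the run (the history then no longer changes).\<close>
fun policy_run :: "('u \<Rightarrow> ('i \<times> real) list \<Rightarrow> 'i option) \<Rightarrow> 'u \<Rightarrow> ('i \<Rightarrow> real) \<Rightarrow> nat
    \<Rightarrow> ('i \<times> real) list" where
  "policy_run \<pi> u r 0 = []"
| "policy_run \<pi> u r (Suc n) =
     (let h = policy_run \<pi> u r n in
       case \<pi> u h of
         None \<Rightarrow> h
       | Some i \<Rightarrow> (if i \<in> fst ` set h then h else h @ [(i, r i)]))"

text \<open>Set of items selected (the run is complete after card N steps when all choices lie in N).\<close>
definition selected :: "'i set \<Rightarrow> ('u \<Rightarrow> ('i \<times> real) list \<Rightarrow> 'i option) \<Rightarrow> 'u \<Rightarrow> ('i \<Rightarrow> real)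
    \<Rightarrow> 'i set" where
  "selected N \<pi> u r = fst ` set (policy_run \<pi> u r (card N))"

definition adaptive_policy :: "'w measure \<Rightarrow> ('i \<Rightarrow> 'w \<Rightarrow> real) \<Rightarrow> 'i set \<Rightarrow> ('i \<Rightarrow> real)
    \<Rightarrow> real \<Rightarrow> 'u measure \<Rightarrow> ('w \<Rightarrow> 'u) \<Rightarrow> 'i set \<Rightarrow> ('u \<Rightarrow> ('i \<times> real) list \<Rightarrow> 'i option)
    \<Rightarrow> bool" where
  "adaptive_policy M R N c B Mu U A \<pi> \<longleftrightarrow>
     (\<forall>u h i. \<pi> u h = Some i \<longrightarrow> i \<in> A) \<and>
     (AE \<omega> in M. sum c (selected N \<pi> (U \<omega>) (\<lambda>i. R i \<omega>)) \<le> B) \<and>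
     (\<forall>i\<in>N. {p \<in> space (Mu \<Otimes>\<^sub>M PiM N (\<lambda>_. borel)). i \<in> selected N \<pi> (fst p) (snd p)}
              \<in> sets (Mu \<Otimes>\<^sub>M PiM N (\<lambda>_. borel)))"

end

theory Submission
  imports Defs
begin

lemma run_mono: "set (policy_run \<pi> u r n) \<subseteq> set (policy_run \<pi> u r (Suc n))"
  by (auto simp: Let_def split: option.split)

lemma run_in_A:
  assumes "\<forall>u h i. \<pi> u h = Some i \<longrightarrow> i \<in> A"
  shows "fst ` set (policy_run \<pi> u r n) \<subseteq> A"
  using assms by (induction n) (auto simp: Let_def split: option.split)

lemma run_agree:
  assumes "\<forall>u h i. \<pi> u h = Some i \<longrightarrow> i \<in> A" and "\<forall>i\<in>A. r i = r' i"
  shows "policy_run \<pi> u r n = policy_run \<pi> u r' n"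
  using assms by (induction n) (auto simp: Let_def split: option.split)

lemma run_update:
  assumes ag: "\<forall>i. i \<noteq> j \<longrightarrow> r i = r' i"
  shows "(policy_run \<pi> u r n = policy_run \<pi> u r' n \<and> j \<notin> fst ` set (policy_run \<pi> u r n)) \<or>
   (j \<in> fst ` set (policy_run \<pi> u r n) \<and> j \<in> fst ` set (policy_run \<pi> u r' n))"
proof (induction n)
  case 0 then show ?case by simp
next
  case (Suc n)
  have m1: "fst ` set (policy_run \<pi> u r n) \<subseteq> fst ` set (policy_run \<pi> u r (Suc n))"
    using run_mono[of \<pi> u r n] by blast
  have m2: "fst ` set (policy_run \<pi> u r' n) \<subseteq> fst ` set (policy_run \<pi> u r' (Suc n))"
    using run_mono[of \<pi> u r' n] by blast
  from Suc show ?case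
  proof
    assume H: "policy_run \<pi> u r n = policy_run \<pi> u r' n \<and> j \<notin> fst ` set (policy_run \<pi> u r n)"
    show ?case
    proof (cases "\<pi> u (policy_run \<pi> u r n)")
      case None then show ?thesis using H by (auto simp: Let_def)
    next
      case (Some i)
      then show ?thesis using H ag by (cases "i = j") (auto simp: Let_def)
    qed
  next
    assume "j \<in> fst ` set (policy_run \<pi> u r n) \<and> j \<in> fst ` set (policy_run \<pi> u r' n)"
    then show ?case using m1 m2 by blast
  qed
qed

lemma sel_update: "(j \<in> selected N \<pi> u (r(j:=y))) = (j \<in> selected N \<pi> u r)"
  unfolding selected_def using run_update[of j r "r(j:=y)" \<pi> u "card N"] by auto

lemma key_pi:
  fixes Pk :: "'i \<Rightarrow> real measure" and h :: "real \<Rightarrow> real"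
  assumes ps: "\<And>i. prob_space (Pk i)" and sp: "\<And>i. space (Pk i) = UNIV"
    and fin: "finite N" and j: "j \<in> N" and G: "G \<in> sets (PiM N Pk)"
    and inv: "\<And>r y. r \<in> space (PiM N Pk) \<Longrightarrow> (r(j:=y) \<in> G) = (r \<in> G)"
    and h: "h \<in> borel_measurable (Pk j)" and hb: "\<And>x. \<bar>h x\<bar> \<le> 1"
  shows "(\<integral>r. indicator G r * h (r j) \<partial>PiM N Pk) = measure (PiM N Pk) G * (\<integral>x. h x \<partial>Pk j)"
proof -
  interpret P: product_prob_space Pk N
    by (simp add: product_prob_space_def product_prob_space_axioms_def product_sigma_finite_def
        ps prob_space_imp_sigma_finite)
  obtain I where I: "N = insert j I" "j \<notin> I" using mk_disjoint_insert[OF j] by blast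
  have finI: "finite I" using fin I by auto
  have PNp: "prob_space (PiM N Pk)" by (rule prob_space_PiM) (use ps in auto)
  have upd: "x(j:=y) \<in> space (PiM N Pk)" if "x \<in> space (PiM I Pk)" for x y
    using that I by (auto simp: space_PiM PiE_def extensional_def sp)
  have indc: "indicator G (x(j:=y)) = (indicator G (x(j:=0)) :: real)" if "x \<in> space (PiM I Pk)" for x y
    using inv[OF upd[OF that, of 0], of y] by (simp add: indicator_def)
  have m1: "(\<lambda>r. indicator G r * h (r j)) \<in> borel_measurable (PiM N Pk)"
    using G h j by measurable
  have int1: "integrable (PiM N Pk) (\<lambda>r. indicator G r * h (r j))"
    by (rule finite_measure.integrable_const_bound[OF prob_space.finite_measure[OF PNp], where B=1]) (use m1 hb in \<open>auto simp: indicator_def\<close>)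
  have int2: "integrable (PiM N Pk) (indicator G :: _ \<Rightarrow> real)"
    by (rule finite_measure.integrable_const_bound[OF prob_space.finite_measure[OF PNp], where B=1]) (use G in \<open>auto simp: indicator_def\<close>)
  have "(\<integral>r. indicator G r * h (r j) \<partial>PiM N Pk)
      = (\<integral>x. (\<integral>y. indicator G (x(j:=y)) * h ((x(j:=y)) j) \<partial>Pk j) \<partial>PiM I Pk)"
    using P.product_integral_insert[OF finI I(2), of "\<lambda>r. indicator G r * h (r j)"] int1 I(1) by simp
  also have "\<dots> = (\<integral>x. indicator G (x(j:=0)) * (\<integral>y. h y \<partial>Pk j) \<partial>PiM I Pk)"
  proof (rule Bochner_Integration.integral_cong[OF refl])
    fix x assume x: "x \<in> space (PiM I Pk)"
    have "(\<lambda>y. indicator G (x(j:=y)) * h ((x(j:=y)) j)) = (\<lambda>y. indicator G (x(j:=0)) * h y)"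
    proof
      fix y show "indicator G (x(j:=y)) * h ((x(j:=y)) j) = indicator G (x(j:=0)) * h y"
        using indc[OF x, of y] by simp
    qed
    then have "(\<integral>y. indicator G (x(j:=y)) * h ((x(j:=y)) j) \<partial>Pk j) = (\<integral>y. indicator G (x(j:=0)) * h y \<partial>Pk j)"
      by simp
    then show "(\<integral>y. indicator G (x(j:=y)) * h ((x(j:=y)) j) \<partial>Pk j) = indicator G (x(j:=0)) * (\<integral>y. h y \<partial>Pk j)"
      by simp
  qed
  also have "\<dots> = (\<integral>x. indicator G (x(j:=0)) \<partial>PiM I Pk) * (\<integral>y. h y \<partial>Pk j)"
    by simp
  also have "(\<integral>x. indicator G (x(j:=0)) \<partial>PiM I Pk) = (\<integral>x. (\<integral>y. indicator G (x(j:=y)) \<partial>Pk j) \<partial>PiM I Pk :: real)"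
  proof (rule Bochner_Integration.integral_cong[OF refl])
    fix x assume x: "x \<in> space (PiM I Pk)"
    have "(\<lambda>y. indicator G (x(j:=y)) :: real) = (\<lambda>y. indicator G (x(j:=0)))"
    proof
      fix y show "indicator G (x(j:=y)) = (indicator G (x(j:=0)) :: real)"
        using indc[OF x, of y] by simp
    qed
    then have "(\<integral>y. indicator G (x(j:=y)) \<partial>Pk j) = (\<integral>y. indicator G (x(j:=0)) \<partial>Pk j :: real)"
      by simp
    then show "indicator G (x(j:=0)) = (\<integral>y. indicator G (x(j:=y)) \<partial>Pk j :: real)"
      by (simp add: prob_space.prob_space[OF ps])
  qed
  also have "\<dots> = (\<integral>r. indicator G r \<partial>PiM N Pk)"
    using P.product_integral_insert[OF finI I(2), of "indicator G :: _ \<Rightarrow> real"] int2 I(1) by simp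
  also have "\<dots> = measure (PiM N Pk) G"
    using G by (simp add: sets.Int_space_eq2)
  finally show ?thesis .
qed

lemma key_pair:
  fixes Q :: "'u measure" and Pk :: "'i \<Rightarrow> real measure" and h :: "real \<Rightarrow> real"
  assumes Q: "prob_space Q"
    and ps: "\<And>i. prob_space (Pk i)" and sp: "\<And>i. space (Pk i) = UNIV"
    and fin: "finite N" and j: "j \<in> N" and G: "G \<in> sets (Q \<Otimes>\<^sub>M PiM N Pk)"
    and inv: "\<And>u r y. u \<in> space Q \<Longrightarrow> r \<in> space (PiM N Pk) \<Longrightarrow> ((u, r(j:=y)) \<in> G) = ((u, r) \<in> G)"
    and h: "h \<in> borel_measurable (Pk j)" and hb: "\<And>x. \<bar>h x\<bar> \<le> 1"
  shows "(\<integral>p. indicator G p * h (snd p j) \<partial>(Q \<Otimes>\<^sub>M PiM N Pk)) = measure (Q \<Otimes>\<^sub>M PiM N Pk) G * (\<integral>x. h x \<partial>Pk j)"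
proof -
  have PNp: "prob_space (PiM N Pk)" by (rule prob_space_PiM) (use ps in auto)
  interpret QP: pair_prob_space Q "PiM N Pk"
    by (simp add: pair_prob_space_def pair_sigma_finite_def Q PNp prob_space_imp_sigma_finite)
  have fm: "finite_measure (Q \<Otimes>\<^sub>M PiM N Pk)" by (rule QP.finite_measure)
  have m1: "(\<lambda>p. indicator G p * h (snd p j)) \<in> borel_measurable (Q \<Otimes>\<^sub>M PiM N Pk)"
    using G h j by measurable
  have int1: "integrable (Q \<Otimes>\<^sub>M PiM N Pk) (\<lambda>p. indicator G p * h (snd p j))"
    by (rule finite_measure.integrable_const_bound[OF fm, where B=1]) (use m1 hb in \<open>auto simp: indicator_def\<close>)
  have int2: "integrable (Q \<Otimes>\<^sub>M PiM N Pk) (indicator G :: _ \<Rightarrow> real)"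
    by (rule finite_measure.integrable_const_bound[OF fm, where B=1]) (use G in \<open>auto simp: indicator_def\<close>)
  have sec: "\<And>u. Pair u -` G \<in> sets (PiM N Pk)" using G by (rule sets_Pair1)
  have "(\<integral>p. indicator G p * h (snd p j) \<partial>(Q \<Otimes>\<^sub>M PiM N Pk))
      = (\<integral>u. (\<integral>r. indicator G (u, r) * h (r j) \<partial>PiM N Pk) \<partial>Q)"
    using QP.integral_fst'[OF int1] by simp
  also have "\<dots> = (\<integral>u. measure (PiM N Pk) (Pair u -` G) * (\<integral>x. h x \<partial>Pk j) \<partial>Q)"
  proof (rule Bochner_Integration.integral_cong[OF refl])
    fix u assume u: "u \<in> space Q"
    have "(\<integral>r. indicator G (u, r) * h (r j) \<partial>PiM N Pk) = (\<integral>r. indicator (Pair u -` G) r * h (r j) \<partial>PiM N Pk)"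
      by (simp add: indicator_def)
    also have "\<dots> = measure (PiM N Pk) (Pair u -` G) * (\<integral>x. h x \<partial>Pk j)"
    proof (rule key_pi[OF ps sp fin j sec[of u] _ h hb])
      fix r y assume "r \<in> space (PiM N Pk)"
      then show "(r(j := y) \<in> Pair u -` G) = (r \<in> Pair u -` G)" using inv[OF u] by simp
    qed
    finally show "(\<integral>r. indicator G (u, r) * h (r j) \<partial>PiM N Pk) = measure (PiM N Pk) (Pair u -` G) * (\<integral>x. h x \<partial>Pk j)" .
  qed
  also have "\<dots> = (\<integral>u. measure (PiM N Pk) (Pair u -` G) \<partial>Q) * (\<integral>x. h x \<partial>Pk j)"
    by simp
  also have "(\<integral>u. measure (PiM N Pk) (Pair u -` G) \<partial>Q) = (\<integral>u. (\<integral>r. indicator G (u, r) \<partial>PiM N Pk) \<partial>Q :: real)"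
  proof (rule Bochner_Integration.integral_cong[OF refl])
    fix u assume u: "u \<in> space Q"
    have "(\<integral>r. indicator G (u, r) \<partial>PiM N Pk) = (\<integral>r. indicator (Pair u -` G) r \<partial>PiM N Pk :: real)"
      by (simp add: indicator_def)
    also have "\<dots> = measure (PiM N Pk) (Pair u -` G)"
      using sec[of u] by (simp add: sets.Int_space_eq2)
    finally show "measure (PiM N Pk) (Pair u -` G) = (\<integral>r. indicator G (u, r) \<partial>PiM N Pk :: real)" by simp
  qed
  also have "\<dots> = (\<integral>p. indicator G p \<partial>(Q \<Otimes>\<^sub>M PiM N Pk))"
    using QP.integral_fst'[OF int2] by simp
  also have "\<dots> = measure (Q \<Otimes>\<^sub>M PiM N Pk) G"
    using G by (simp add: sets.Int_space_eq2)
  finally show ?thesis .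
qed

lemma sum_min1:
  fixes a :: "'a \<Rightarrow> real"
  assumes "finite A" "\<forall>x\<in>A. 0 \<le> a x"
  shows "min (\<Sum>x\<in>A. a x) 1 \<le> (\<Sum>x\<in>A. min (a x) 1)"
  using assms
proof (induction A rule: finite_induct)
  case empty then show ?case by simp
next
  case (insert x F)
  have s: "0 \<le> (\<Sum>y\<in>F. a y)" using insert by (auto intro: sum_nonneg)
  have "min (\<Sum>y\<in>insert x F. a y) 1 = min (a x + (\<Sum>y\<in>F. a y)) 1" using insert by simp
  also have "\<dots> \<le> min (a x) 1 + min (\<Sum>y\<in>F. a y) 1" using s insert by auto
  also have "\<dots> \<le> min (a x) 1 + (\<Sum>y\<in>F. min (a y) 1)" using insert by auto
  finally show ?case using insert by simp
qed

lemma Int_stable_vimage: "Int_stable {X -` A \<inter> \<Omega> | A. A \<in> sets S}"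
  unfolding Int_stable_def
proof safe
  fix A B assume AB: "A \<in> sets S" "B \<in> sets S"
  have "(X -` A \<inter> \<Omega>) \<inter> (X -` B \<inter> \<Omega>) = X -` (A \<inter> B) \<inter> \<Omega>" by auto
  moreover have "A \<inter> B \<in> sets S" using AB by auto
  ultimately show "\<exists>C. (X -` A \<inter> \<Omega>) \<inter> (X -` B \<inter> \<Omega>) = X -` C \<inter> \<Omega> \<and> C \<in> sets S" by blast
qed

lemma sel_subset:
  assumes "\<forall>u h i. \<pi> u h = Some i \<longrightarrow> i \<in> A"
  shows "selected N \<pi> u r \<subseteq> A"
  unfolding selected_def using run_in_A[OF assms] by blast

lemma sel_agree:
  assumes "\<forall>u h i. \<pi> u h = Some i \<longrightarrow> i \<in> A" and "\<forall>i\<in>A. r i = r' i"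
  shows "selected N \<pi> u r = selected N \<pi> u r'"
  unfolding selected_def using run_agree[OF assms] by simp

lemma core:
  fixes M :: "'w measure" and R :: "'i \<Rightarrow> 'w \<Rightarrow> real" and N :: "'i set"
    and c :: "'i \<Rightarrow> real" and Mu :: "'u measure" and U :: "'w \<Rightarrow> 'u"
    and S :: "'i set" and \<kappa> B \<epsilon> :: real
  assumes M: "prob_space M" and fin: "finite N" and Nne: "N \<noteq> {}"
    and cpos: "\<forall>i\<in>N. c i > 0"
    and Rm: "\<forall>i\<in>N. R i \<in> borel_measurable M"
    and Rnn: "\<forall>i\<in>N. AE \<omega> in M. R i \<omega> \<ge> 0"
    and ind: "prob_space.indep_vars M (\<lambda>_. borel) R N"
    and Um: "U \<in> measurable M Mu"
    and indU: "prob_space.indep_set M {U -` A \<inter> space M | A. A \<in> sets Mu}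
           {(\<lambda>\<omega>. restrict (\<lambda>i. R i \<omega>) N) -` A \<inter> space M | A. A \<in> sets (PiM N (\<lambda>_. borel))}"
    and B: "B > 0" and \<kappa>: "\<kappa> > 0" and eps: "\<epsilon> \<ge> 0"
    and slope: "\<forall>j\<in>N-S. c j \<le> B \<longrightarrow> rtau M R \<kappa> j \<le> (\<epsilon>/B) * c j"
    and pol: "adaptive_policy M R N c B Mu U N \<pi>"
  shows "{\<omega>\<in>space M. (\<Sum>i\<in>selected N \<pi> (U \<omega>) (\<lambda>i. R i \<omega>) - S. R i \<omega>) \<ge> \<kappa>} \<in> sets M \<and>
         measure M {\<omega>\<in>space M. (\<Sum>i\<in>selected N \<pi> (U \<omega>) (\<lambda>i. R i \<omega>) - S. R i \<omega>) \<ge> \<kappa>} \<le> \<epsilon>"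
proof -
  interpret prob_space M by (rule M)
  define Rv where "Rv = (\<lambda>\<omega>. restrict (\<lambda>i. R i \<omega>) N)"
  define PN where "PN = PiM N (\<lambda>_. borel :: real measure)"
  define X where "X = Mu \<Otimes>\<^sub>M PN"
  define \<Phi> where "\<Phi> = (\<lambda>\<omega>. (U \<omega>, Rv \<omega>))"
  define Pk where "Pk = (\<lambda>i. if i \<in> N then distr M borel (R i) else distr M borel (\<lambda>_. 0::real))"
  define Q where "Q = distr M Mu U"
  define sel where "sel = (\<lambda>p. selected N \<pi> (fst p) (snd p))"
  define sel0 where "sel0 = (\<lambda>\<omega>. selected N \<pi> (U \<omega>) (\<lambda>i. R i \<omega>))"
  have pick: "\<forall>u h i. \<pi> u h = Some i \<longrightarrow> i \<in> N" and costAE: "AE \<omega> in M. sum c (sel0 \<omega>) \<le> B"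
    and Emeas: "\<forall>i\<in>N. {p \<in> space X. i \<in> sel p} \<in> sets X"
    using pol unfolding adaptive_policy_def X_def PN_def sel_def sel0_def by auto
  have Rvm: "Rv \<in> measurable M PN"
    unfolding Rv_def PN_def by (rule measurable_restrict) (use Rm in auto)
  have \<Phi>m: "\<Phi> \<in> measurable M X"
    unfolding \<Phi>_def X_def using Um Rvm by measurable
  have selN: "\<And>p. sel p \<subseteq> N" unfolding sel_def by (rule sel_subset[OF pick])
  have sel0N: "\<And>\<omega>. sel0 \<omega> \<subseteq> N" unfolding sel0_def by (rule sel_subset[OF pick])
  have sel\<Phi>: "sel0 \<omega> = sel (\<Phi> \<omega>)" for \<omega>
    unfolding sel0_def sel_def \<Phi>_def Rv_def by (simp, rule sel_agree[OF pick]) simp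
  have Pkp: "\<And>i. prob_space (Pk i)" unfolding Pk_def using Rm
    by (auto intro!: prob_space_distr prob_space_return)
  have Pksp: "\<And>i. space (Pk i) = UNIV" unfolding Pk_def by simp
  have Pksets: "\<And>i. sets (Pk i) = sets borel" unfolding Pk_def by simp
  have distrRv: "distr M PN Rv = PiM N Pk"
  proof -
    have "distr M PN Rv = PiM N (\<lambda>i. distr M borel (R i))"
      using indep_vars_iff_distr_eq_PiM'[OF Nne, where M'="\<lambda>_. borel" and X=R] ind Rm
      unfolding PN_def Rv_def by auto
    also have "\<dots> = PiM N Pk" by (rule PiM_cong) (auto simp: Pk_def)
    finally show ?thesis .
  qed
  have Pdef: "distr M X \<Phi> = Q \<Otimes>\<^sub>M PiM N Pk"
  proof -
    have "Q \<Otimes>\<^sub>M distr M PN Rv = distr M X \<Phi>"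
    proof (rule pair_measure_eqI)
      show "sigma_finite_measure Q"
        unfolding Q_def by (rule prob_space_imp_sigma_finite[OF prob_space_distr[OF Um]])
      show "sigma_finite_measure (distr M PN Rv)"
        by (rule prob_space_imp_sigma_finite[OF prob_space_distr[OF Rvm]])
      have "sets (Q \<Otimes>\<^sub>M distr M PN Rv) = sets (Mu \<Otimes>\<^sub>M PN)"
        by (rule sets_pair_measure_cong) (simp_all add: Q_def)
      then show "sets (Q \<Otimes>\<^sub>M distr M PN Rv) = sets (distr M X \<Phi>)" by (simp add: X_def)
      fix A B assume A: "A \<in> sets Q" and B: "B \<in> sets (distr M PN Rv)"
      then have A': "A \<in> sets Mu" and B': "B \<in> sets PN" by (simp_all add: Q_def)
      have ev: "U -` A \<inter> space M \<in> {U -` A \<inter> space M | A. A \<in> sets Mu}"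
               "Rv -` B \<inter> space M \<in> {Rv -` A \<inter> space M | A. A \<in> sets PN}"
        using A' B' by blast+
      have ind2: "\<forall>a\<in>{U -` A \<inter> space M | A. A \<in> sets Mu}. \<forall>b\<in>{Rv -` A \<inter> space M | A. A \<in> sets PN}. prob (a \<inter> b) = prob a * prob b"
        using indU unfolding indep_sets2_eq Rv_def PN_def by (elim conjE)
      have prodp: "prob ((U -` A \<inter> space M) \<inter> (Rv -` B \<inter> space M)) = prob (U -` A \<inter> space M) * prob (Rv -` B \<inter> space M)"
        using bspec[OF bspec[OF ind2 ev(1)] ev(2)] .
      have AB: "A \<times> B \<in> sets X" using A' B' by (simp add: X_def)
      have pre: "\<Phi> -` (A \<times> B) \<inter> space M = (U -` A \<inter> space M) \<inter> (Rv -` B \<inter> space M)"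
        by (auto simp: \<Phi>_def)
      have "emeasure Q A * emeasure (distr M PN Rv) B
          = emeasure M (U -` A \<inter> space M) * emeasure M (Rv -` B \<inter> space M)"
        using A' B' Um Rvm by (simp add: Q_def emeasure_distr)
      also have "\<dots> = ennreal (prob (U -` A \<inter> space M) * prob (Rv -` B \<inter> space M))"
        by (simp add: emeasure_eq_measure ennreal_mult)
      also have "\<dots> = emeasure M (\<Phi> -` (A \<times> B) \<inter> space M)"
        using prodp pre by (simp add: emeasure_eq_measure)
      also have "\<dots> = emeasure (distr M X \<Phi>) (A \<times> B)"
        using \<Phi>m AB by (simp add: emeasure_distr)
      finally show "emeasure Q A * emeasure (distr M PN Rv) B = emeasure (distr M X \<Phi>) (A \<times> B)" .
    qed
    then show ?thesis using distrRv by simp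
  qed
  define PP where "PP = Q \<Otimes>\<^sub>M PiM N Pk"
  have Pdef': "distr M X \<Phi> = PP" using Pdef by (simp add: PP_def)
  have setsPP: "sets PP = sets X" using Pdef' by (metis sets_distr)
  have spacePP: "space PP = space X" using Pdef' by (metis space_distr)
  have PPp: "prob_space PP" using Pdef' \<Phi>m by (metis prob_space_distr)
  have fmPP: "finite_measure PP" using PPp by (rule prob_space.finite_measure)
  have Qp: "prob_space Q" unfolding Q_def using Um by (rule prob_space_distr)
  define E where "E = (\<lambda>j. {p \<in> space X. j \<in> sel p})"
  have Esets: "E j \<in> sets X" if "j \<in> N" for j using Emeas that unfolding E_def by auto
  have EsetsPP: "E j \<in> sets PP" if "j \<in> N" for j using Esets[OF that] setsPP by simp
  have \<Phi>sp: "\<Phi> \<omega> \<in> space X" if "\<omega> \<in> space M" for \<omega> using \<Phi>m that by (rule measurable_space)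
  have preE: "\<Phi> -` E j \<inter> space M = {\<omega>\<in>space M. j \<in> sel0 \<omega>}" for j
    using \<Phi>sp by (auto simp: E_def sel\<Phi>)
  have Esel: "indicator (E j) (\<Phi> \<omega>) = (if j \<in> sel0 \<omega> then 1 else (0::real))" if "\<omega> \<in> space M" for \<omega> j
    using \<Phi>sp[OF that] by (auto simp: E_def sel\<Phi> indicator_def)
  have sel0sets: "{\<omega>\<in>space M. j \<in> sel0 \<omega>} \<in> sets M" if "j \<in> N" for j
    using measurable_sets[OF \<Phi>m Esets[OF that]] preE by simp
  have pE: "measure PP (E j) = prob {\<omega>\<in>space M. j \<in> sel0 \<omega>}" if "j \<in> N" for j
    using measure_distr[OF \<Phi>m Esets[OF that]] Pdef' preE by simp
  define h where "h = (\<lambda>x::real. min (max x 0 / \<kappa>) 1)"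
  have hborel: "h \<in> borel_measurable borel" unfolding h_def by measurable
  have hm: "h \<in> borel_measurable (Pk j)" for j
    using measurable_cong_sets[OF Pksets[of j] refl, of "borel :: real measure"] hborel by (simp only:)
  have hb: "\<bar>h x\<bar> \<le> 1" for x using \<kappa> unfolding h_def by (auto simp: min_def)
  have hint: "(\<integral>x. h x \<partial>Pk j) = rtau M R \<kappa> j" if j: "j \<in> N" for j
  proof -
    have Rj: "R j \<in> borel_measurable M" using Rm j by auto
    have "(\<integral>x. h x \<partial>Pk j) = (\<integral>\<omega>. h (R j \<omega>) \<partial>M)"
      using integral_distr[OF Rj hborel] j by (simp add: Pk_def)
    also have "\<dots> = (\<integral>\<omega>. min (R j \<omega> / \<kappa>) 1 \<partial>M)"
    proof (rule integral_cong_AE)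
      show "(\<lambda>\<omega>. h (R j \<omega>)) \<in> borel_measurable M" using Rj hborel by measurable
      show "(\<lambda>\<omega>. min (R j \<omega> / \<kappa>) 1) \<in> borel_measurable M" using Rj by measurable
      show "AE \<omega> in M. h (R j \<omega>) = min (R j \<omega> / \<kappa>) 1"
        using Rnn j by (auto simp: h_def elim!: AE_mp)
    qed
    finally show ?thesis by (simp add: rtau_def)
  qed
  have spPN: "space (PiM N Pk) = space PN" unfolding PN_def by (simp add: space_PiM Pksp)
  have key: "(\<integral>p. indicator (E j) p * h (snd p j) \<partial>PP) = measure PP (E j) * rtau M R \<kappa> j"
    if j: "j \<in> N" for j
  proof -
    have "(\<integral>p. indicator (E j) p * h (snd p j) \<partial>PP) = measure PP (E j) * (\<integral>x. h x \<partial>Pk j)"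
      unfolding PP_def
    proof (rule key_pair[OF Qp Pkp Pksp fin j _ _ hm hb])
      show "E j \<in> sets (Q \<Otimes>\<^sub>M PiM N Pk)" using EsetsPP[OF j] by (simp add: PP_def)
      fix u r y assume u: "u \<in> space Q" and r: "r \<in> space (PiM N Pk)"
      have ru: "r(j:=y) \<in> space PN" using r j spPN unfolding PN_def
        by (auto simp: space_PiM PiE_def extensional_def)
      have uX: "(u, r') \<in> space X" if "r' \<in> space PN" for r'
        using u that by (simp add: X_def space_pair_measure Q_def)
      show "((u, r(j := y)) \<in> E j) = ((u, r) \<in> E j)"
        using uX[OF ru] uX r spPN sel_update[of j N \<pi> u r y] by (auto simp: E_def sel_def)
    qed
    then show ?thesis using hint[OF j] by simp
  qed
  have spX: "space X = space Mu \<times> space PN" by (simp add: X_def space_pair_measure)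
  have sndm: "(\<lambda>p. snd p j) \<in> borel_measurable X" if j: "j \<in> N" for j
  proof -
    have "(\<lambda>r. r j) \<in> borel_measurable PN" unfolding PN_def using j by (rule measurable_component_singleton)
    then show ?thesis unfolding X_def by measurable
  qed
  define F where "F = (\<lambda>p. \<Sum>j\<in>N-S. indicator (E j) p * snd p j)"
  have Fm: "F \<in> borel_measurable X"
    unfolding F_def
    by (intro borel_measurable_sum borel_measurable_times borel_measurable_indicator Esets sndm) auto
  define Fset where "Fset = {p\<in>space X. \<kappa> \<le> F p}"
  have Fset_eq: "Fset = F -` {\<kappa>..} \<inter> space X" by (auto simp: Fset_def)
  have Fsets: "Fset \<in> sets X" unfolding Fset_eq by (rule measurable_sets[OF Fm]) simp
  have Fphi: "F (\<Phi> \<omega>) = (\<Sum>i\<in>sel0 \<omega> - S. R i \<omega>)" if w: "\<omega> \<in> space M" for \<omega>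
  proof -
    have "F (\<Phi> \<omega>) = (\<Sum>j\<in>N-S. if j \<in> sel0 \<omega> then R j \<omega> else 0)"
      unfolding F_def
    proof (rule sum.cong[OF refl])
      fix j assume j: "j \<in> N - S"
      have "snd (\<Phi> \<omega>) j = R j \<omega>" using j by (simp add: \<Phi>_def Rv_def)
      then show "indicator (E j) (\<Phi> \<omega>) * snd (\<Phi> \<omega>) j = (if j \<in> sel0 \<omega> then R j \<omega> else 0)"
        by (simp add: Esel[OF w])
    qed
    also have "\<dots> = sum (\<lambda>i. R i \<omega>) ((N - S) \<inter> sel0 \<omega>)"
      by (rule sum.inter_restrict[symmetric]) (use fin in auto)
    also have "(N - S) \<inter> sel0 \<omega> = sel0 \<omega> - S" using sel0N by auto
    finally show ?thesis .
  qed
  have Aeq: "{\<omega>\<in>space M. (\<Sum>i\<in>selected N \<pi> (U \<omega>) (\<lambda>i. R i \<omega>) - S. R i \<omega>) \<ge> \<kappa>} = \<Phi> -` Fset \<inter> space M"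
    using \<Phi>sp Fphi by (auto simp: Fset_def sel0_def)
  have Asets: "\<Phi> -` Fset \<inter> space M \<in> sets M" by (rule measurable_sets[OF \<Phi>m Fsets])
  have Ameas: "measure M (\<Phi> -` Fset \<inter> space M) = measure PP Fset"
    using measure_distr[OF \<Phi>m Fsets] Pdef' by simp
  have FsetsPP: "Fset \<in> sets PP" using Fsets setsPP by simp
  have intj: "integrable PP (\<lambda>p. indicator (E j) p * h (snd p j))" if j: "j \<in> N" for j
  proof (rule finite_measure.integrable_const_bound[OF fmPP, where B=1])
    show "AE x in PP. norm (indicator (E j) x * h (snd x j)) \<le> 1"
      using hb by (auto simp: indicator_def)
    have "(\<lambda>p. indicator (E j) p * h (snd p j)) \<in> borel_measurable X"
      using Esets[OF j] sndm[OF j] hborel by measurable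
    then show "(\<lambda>p. indicator (E j) p * h (snd p j)) \<in> borel_measurable PP"
      using measurable_cong_sets[OF setsPP refl, of "borel :: real measure"] by (simp only:)
  qed
  have intF: "integrable PP (indicator Fset :: _ \<Rightarrow> real)"
    by (rule finite_measure.integrable_const_bound[OF fmPP, where B=1]) (use FsetsPP in \<open>auto simp: indicator_def\<close>)
  have pw: "indicator Fset p \<le> (\<Sum>j\<in>N-S. indicator (E j) p * h (snd p j))" for p
  proof (cases "p \<in> Fset")
    case False
    then show ?thesis using hb \<kappa>
      by (auto intro!: sum_nonneg divide_nonneg_pos simp: indicator_def h_def \<kappa>)
  next
    case True
    define a where "a = (\<lambda>j. indicator (E j) p * (max (snd p j) 0 / \<kappa>))"
    have a0: "\<forall>j\<in>N-S. 0 \<le> a j" using \<kappa> by (auto simp: a_def indicator_def)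
    have eqj: "indicator (E j) p * h (snd p j) = min (a j) 1" for j
      by (auto simp: a_def indicator_def h_def)
    have "F p / \<kappa> \<le> (\<Sum>j\<in>N-S. a j)"
    proof -
      have "F p / \<kappa> = (\<Sum>j\<in>N-S. indicator (E j) p * snd p j / \<kappa>)"
        unfolding F_def by (simp add: sum_divide_distrib)
      also have "\<dots> \<le> (\<Sum>j\<in>N-S. a j)"
        by (rule sum_mono) (use \<kappa> in \<open>auto simp: a_def indicator_def divide_right_mono\<close>)
      finally show ?thesis .
    qed
    moreover have "1 \<le> F p / \<kappa>" using True \<kappa> by (simp add: Fset_def)
    ultimately have "1 \<le> min (\<Sum>j\<in>N-S. a j) 1" by simp
    also have "\<dots> \<le> (\<Sum>j\<in>N-S. min (a j) 1)" by (rule sum_min1) (use fin a0 in auto)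
    finally show ?thesis using True by (simp add: eqj)
  qed
  have pzero: "measure PP (E j) = 0" if j: "j \<in> N" and cj: "c j > B" for j
  proof -
    have "AE \<omega> in M. j \<notin> sel0 \<omega>"
      using costAE
    proof (rule AE_mp, intro AE_I2 impI)
      fix \<omega> assume w: "\<omega> \<in> space M" and cs: "sum c (sel0 \<omega>) \<le> B"
      show "j \<notin> sel0 \<omega>"
      proof
        assume js: "j \<in> sel0 \<omega>"
        have "c j \<le> sum c (sel0 \<omega>)"
          by (rule member_le_sum[OF js]) (use sel0N cpos finite_subset[OF sel0N fin] in \<open>fastforce intro: less_imp_le\<close>)+
        then show False using cs cj by simp
      qed
    qed
    then have "emeasure M {\<omega>\<in>space M. j \<in> sel0 \<omega>} = 0"
      using AE_iff_measurable[OF sel0sets[OF j], of "\<lambda>\<omega>. j \<notin> sel0 \<omega>"] by simp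
    then show ?thesis using pE[OF j] by (simp add: measure_def)
  qed
  have cost: "(\<Sum>j\<in>N. measure PP (E j) * c j) \<le> B"
  proof -
    have intI: "integrable M (\<lambda>\<omega>. indicator {\<omega>\<in>space M. j \<in> sel0 \<omega>} \<omega> * c j)" if j: "j \<in> N" for j
      using sel0sets[OF j] by (intro integrable_mult_left integrable_real_indicator) (auto simp: emeasure_eq_measure)
    have "(\<Sum>j\<in>N. measure PP (E j) * c j) = (\<Sum>j\<in>N. (\<integral>\<omega>. indicator {\<omega>\<in>space M. j \<in> sel0 \<omega>} \<omega> * c j \<partial>M))"
      by (rule sum.cong) (auto simp: pE sel0sets)
    also have "\<dots> = (\<integral>\<omega>. (\<Sum>j\<in>N. indicator {\<omega>\<in>space M. j \<in> sel0 \<omega>} \<omega> * c j) \<partial>M)"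
      using Bochner_Integration.integral_sum[where I=N and M=M and f="\<lambda>j \<omega>. indicator {\<omega>\<in>space M. j \<in> sel0 \<omega>} \<omega> * c j"] intI by simp
    also have "\<dots> \<le> (\<integral>\<omega>. B \<partial>M)"
    proof (rule integral_mono_AE)
      show "integrable M (\<lambda>\<omega>. \<Sum>j\<in>N. indicator {\<omega>\<in>space M. j \<in> sel0 \<omega>} \<omega> * c j)"
        using intI by (intro Bochner_Integration.integrable_sum) auto
      show "integrable M (\<lambda>\<omega>. B)" by simp
      show "AE \<omega> in M. (\<Sum>j\<in>N. indicator {\<omega>\<in>space M. j \<in> sel0 \<omega>} \<omega> * c j) \<le> B"
        using costAE
      proof (rule AE_mp, intro AE_I2 impI)
        fix \<omega> assume w: "\<omega> \<in> space M" and cs: "sum c (sel0 \<omega>) \<le> B"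
        have "(\<Sum>j\<in>N. indicator {\<omega>\<in>space M. j \<in> sel0 \<omega>} \<omega> * c j) = (\<Sum>j\<in>N. if j \<in> sel0 \<omega> then c j else 0)"
          by (rule sum.cong) (use w in \<open>auto simp: indicator_def\<close>)
        also have "\<dots> = sum c (N \<inter> sel0 \<omega>)" by (rule sum.inter_restrict[symmetric]) (rule fin)
        also have "N \<inter> sel0 \<omega> = sel0 \<omega>" using sel0N by auto
        finally show "(\<Sum>j\<in>N. indicator {\<omega>\<in>space M. j \<in> sel0 \<omega>} \<omega> * c j) \<le> B" using cs by simp
      qed
    qed
    also have "\<dots> = B" by (simp add: prob_space)
    finally show ?thesis .
  qed
  have "measure PP Fset = (\<integral>p. indicator Fset p \<partial>PP)"
    using FsetsPP by (simp add: sets.Int_space_eq2)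
  also have "\<dots> \<le> (\<integral>p. (\<Sum>j\<in>N-S. indicator (E j) p * h (snd p j)) \<partial>PP)"
    by (rule integral_mono[OF intF]) (auto intro!: Bochner_Integration.integrable_sum intj pw)
  also have "\<dots> = (\<Sum>j\<in>N-S. (\<integral>p. indicator (E j) p * h (snd p j) \<partial>PP))"
    using Bochner_Integration.integral_sum[where I="N-S" and M=PP and f="\<lambda>j p. indicator (E j) p * h (snd p j)"] intj by simp
  also have "\<dots> = (\<Sum>j\<in>N-S. measure PP (E j) * rtau M R \<kappa> j)"
    by (rule sum.cong) (auto simp: key)
  also have "\<dots> \<le> (\<Sum>j\<in>N-S. measure PP (E j) * ((\<epsilon>/B) * c j))"
  proof (rule sum_mono)
    fix j assume j: "j \<in> N - S"
    show "measure PP (E j) * rtau M R \<kappa> j \<le> measure PP (E j) * ((\<epsilon>/B) * c j)"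
    proof (cases "c j \<le> B")
      case True
      then have "rtau M R \<kappa> j \<le> (\<epsilon>/B) * c j" using slope j by blast
      then show ?thesis by (rule mult_left_mono) simp
    next
      case False
      then show ?thesis using pzero j by simp
    qed
  qed
  also have "\<dots> \<le> (\<Sum>j\<in>N. measure PP (E j) * ((\<epsilon>/B) * c j))"
  proof (rule sum_mono2[OF fin])
    fix b assume b: "b \<in> N - (N - S)"
    have "0 \<le> c b" using cpos b by (auto intro: less_imp_le)
    then show "0 \<le> measure PP (E b) * ((\<epsilon>/B) * c b)" using eps B by simp
  qed auto
  also have "\<dots> = (\<epsilon>/B) * (\<Sum>j\<in>N. measure PP (E j) * c j)"
    by (simp add: sum_distrib_left algebra_simps)
  also have "\<dots> \<le> (\<epsilon>/B) * B"
    by (rule mult_left_mono[OF cost]) (use eps B in auto)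
  also have "\<dots> = \<epsilon>" using B by simp
  finally show ?thesis using Aeq Asets Ameas by simp
qed

theorem mainTheorem8:
  fixes M :: "'w measure" and R :: "'i \<Rightarrow> 'w \<Rightarrow> real" and N :: "'i set"
    and c :: "'i \<Rightarrow> real" and W :: nat and B C \<epsilon> :: real
    and \<sigma> :: "real \<Rightarrow> nat \<Rightarrow> 'i"
    and Mu :: "'u measure" and U :: "'w \<Rightarrow> 'u"
  assumes "prob_space M"
    and "finite N"
    and "\<forall>i\<in>N. c i > 0"
    and "\<forall>i\<in>N. R i \<in> borel_measurable M"
    and "\<forall>i\<in>N. AE \<omega> in M. R i \<omega> \<ge> 0"
    and "\<forall>i\<in>N. integrable M (R i)"
    and "prob_space.indep_vars M (\<lambda>_. borel) R N"
    and "W \<ge> 1"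
    and "(\<Sum>i\<in>N. \<integral>\<omega>. R i \<omega> \<partial>M) \<le> real W"
    and "B > 0" and "0 < \<epsilon>" and "\<epsilon> < 1" and "C > 0"
    and "\<forall>\<tau>\<in>scales W. valid_order M R N c B \<tau> (\<sigma> \<tau>)"
    and "\<exists>\<tau>\<in>scales W. poor M R N c B C \<epsilon> \<tau> (\<sigma> \<tau>)"
    and "U \<in> measurable M Mu"
    and "prob_space.indep_set M {U -` A \<inter> space M | A. A \<in> sets Mu}
           {(\<lambda>\<omega>. restrict (\<lambda>i. R i \<omega>) N) -` A \<inter> space M | A. A \<in> sets (PiM N (\<lambda>_. borel))}"
  shows "(let \<kappa> = crit_scale M R N c W B C \<epsilon> \<sigma>;
              S = S_tau N c B C (\<sigma> \<kappa>) in
          (\<forall>\<pi>. adaptive_policy M R N c B Mu U (N - S) \<pi> \<longrightarrow>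
                measure M {\<omega> \<in> space M. (\<Sum>i\<in>selected N \<pi> (U \<omega>) (\<lambda>i. R i \<omega>). R i \<omega>) < \<kappa>}
                  \<ge> 1 - \<epsilon>) \<and>
          (\<forall>\<pi>. adaptive_policy M R N c B Mu U N \<pi> \<longrightarrow>
                measure M {\<omega> \<in> space M. (\<Sum>i\<in>selected N \<pi> (U \<omega>) (\<lambda>i. R i \<omega>) - S. R i \<omega>) \<ge> \<kappa>}
                  \<le> \<epsilon>))"
proof -
  interpret prob_space M by (rule assms(1))
  note fin = assms(2) and cpos = assms(3) and Rm = assms(4) and Rnn = assms(5) and ind = assms(7)
  note B = assms(10) and eps = assms(11) assms(12) and C = assms(13) and vo = assms(14) and ex = assms(15)
  note Um = assms(16) and indU = assms(17)
  define Pset where "Pset = {\<tau> \<in> scales W. poor M R N c B C \<epsilon> \<tau> (\<sigma> \<tau>)}"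
  define \<kappa> where "\<kappa> = crit_scale M R N c W B C \<epsilon> \<sigma>"
  define S where "S = S_tau N c B C (\<sigma> \<kappa>)"
  have finsc: "finite (scales W)"
  proof -
    have "scales W \<subseteq> (\<lambda>l. (2::real) ^ l) ` {..nat \<lceil>log 2 (real W)\<rceil>}"
      unfolding scales_def by auto
    then show ?thesis by (rule finite_subset) simp
  qed
  have Pne: "Pset \<noteq> {}" using ex unfolding Pset_def by auto
  have Pfin: "finite Pset" using finsc unfolding Pset_def by auto
  have \<kappa>P: "\<kappa> \<in> Pset" unfolding \<kappa>_def crit_scale_def Pset_def[symmetric] using Pfin Pne by (rule Min_in)
  then have \<kappa>sc: "\<kappa> \<in> scales W" and poor\<kappa>: "poor M R N c B C \<epsilon> \<kappa> (\<sigma> \<kappa>)" unfolding Pset_def by auto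
  have \<kappa>pos: "\<kappa> > 0" using \<kappa>sc unfolding scales_def by auto
  have vk: "valid_order M R N c B \<kappa> (\<sigma> \<kappa>)" using vo \<kappa>sc by auto
  have slope_ok: "\<forall>j\<in>N-S. c j \<le> B \<longrightarrow> rtau M R \<kappa> j \<le> (\<epsilon>/B) * c j"
  proof (intro ballI impI)
    fix j assume jS: "j \<in> N - S" and cj: "c j \<le> B"
    define T where "T = Tset N c B"
    define s where "s = \<sigma> \<kappa>"
    have jT: "j \<in> T" using jS cj by (simp add: T_def Tset_def)
    have bij: "bij_betw s {..<card T} T" and mono: "\<forall>a b. a \<le> b \<and> b < card T \<longrightarrow>
        rtau M R \<kappa> (s b) / c (s b) \<le> rtau M R \<kappa> (s a) / c (s a)"
      using vk unfolding valid_order_def T_def s_def by auto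
    show "rtau M R \<kappa> j \<le> (\<epsilon>/B) * c j"
    proof (cases "sum c T \<ge> C * B")
      case False
      then have "S = T" by (simp add: S_def S_tau_def T_def)
      then show ?thesis using jS jT by simp
    next
      case True
      define t where "t = cutoff c s (C * B)"
      have St: "S = s ` {..<t}" using True by (simp add: S_def S_tau_def T_def t_def s_def)
      have slp: "slope M R N c B C \<kappa> s = rtau M R \<kappa> (s (t - 1)) / c (s (t - 1))"
        using True by (simp add: slope_def T_def t_def Let_def)
      have "(\<Sum>i<card T. c (s i)) = sum c T"
        using sum.reindex_bij_betw[OF bij, of c] by simp
      then have exT: "C * B \<le> (\<Sum>i<card T. c (s i))" using True by simp
      have tle: "t \<le> card T" unfolding t_def cutoff_def by (rule Least_le) (rule exT)
      have tC: "C * B \<le> (\<Sum>i<t. c (s i))" unfolding t_def cutoff_def by (rule LeastI) (rule exT)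
      have t1: "t \<ge> 1"
      proof (rule ccontr)
        assume "\<not> t \<ge> 1" then have "t = 0" by simp
        then show False using tC C B using mult_pos_pos[OF C B] by simp
      qed
      obtain k where k: "k < card T" "s k = j" using bij jT
        by (metis bij_betw_iff_bijections lessThan_iff)
      have kt: "t \<le> k"
      proof (rule ccontr)
        assume "\<not> t \<le> k" then have "j \<in> S" using k St by auto
        then show False using jS by simp
      qed
      have "rtau M R \<kappa> j / c j \<le> rtau M R \<kappa> (s (t - 1)) / c (s (t - 1))"
        using mono[rule_format, of "t - 1" k] k kt t1 by simp
      also have "\<dots> \<le> \<epsilon> / B" using poor\<kappa> slp unfolding poor_def s_def by simp
      finally have "rtau M R \<kappa> j / c j \<le> \<epsilon> / B" .
      moreover have "c j > 0" using cpos jS by auto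
      ultimately show ?thesis by (simp add: pos_divide_le_eq mult.commute)
    qed
  qed
  have weak: "adaptive_policy M R N c B Mu U N \<pi>" if "adaptive_policy M R N c B Mu U A \<pi>" "A \<subseteq> N" for A \<pi>
    using that unfolding adaptive_policy_def by blast
  show ?thesis
    unfolding Let_def \<kappa>_def[symmetric] S_def[symmetric]
  proof (cases "N = {}")
    case True
    have sel_empty: "selected N \<pi> u r = {}" if "adaptive_policy M R N c B Mu U A \<pi>" "A \<subseteq> N" for A \<pi> u r
      using sel_subset[of \<pi> A N u r] that True unfolding adaptive_policy_def by auto
    show "(\<forall>\<pi>. adaptive_policy M R N c B Mu U (N - S) \<pi> \<longrightarrow>
          1 - \<epsilon> \<le> measure M {\<omega> \<in> space M. (\<Sum>i\<in>selected N \<pi> (U \<omega>) (\<lambda>i. R i \<omega>). R i \<omega>) < \<kappa>}) \<and>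
          (\<forall>\<pi>. adaptive_policy M R N c B Mu U N \<pi> \<longrightarrow>
          measure M {\<omega> \<in> space M. \<kappa> \<le> (\<Sum>i\<in>selected N \<pi> (U \<omega>) (\<lambda>i. R i \<omega>) - S. R i \<omega>)} \<le> \<epsilon>)"
    proof (intro conjI allI impI)
      fix \<pi> assume p: "adaptive_policy M R N c B Mu U (N - S) \<pi>"
      have "{\<omega> \<in> space M. (\<Sum>i\<in>selected N \<pi> (U \<omega>) (\<lambda>i. R i \<omega>). R i \<omega>) < \<kappa>} = space M"
        using sel_empty[OF p] \<kappa>pos by auto
      then show "1 - \<epsilon> \<le> measure M {\<omega> \<in> space M. (\<Sum>i\<in>selected N \<pi> (U \<omega>) (\<lambda>i. R i \<omega>). R i \<omega>) < \<kappa>}"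
        using eps by (simp add: prob_space)
    next
      fix \<pi> assume p: "adaptive_policy M R N c B Mu U N \<pi>"
      have E0: "{\<omega> \<in> space M. \<kappa> \<le> (\<Sum>i\<in>selected N \<pi> (U \<omega>) (\<lambda>i. R i \<omega>) - S. R i \<omega>)} = {}"
        using sel_empty[OF p] \<kappa>pos by auto
      show "measure M {\<omega> \<in> space M. \<kappa> \<le> (\<Sum>i\<in>selected N \<pi> (U \<omega>) (\<lambda>i. R i \<omega>) - S. R i \<omega>)} \<le> \<epsilon>"
        using eps by (simp only: E0 measure_empty less_imp_le)
    qed
  next
    case False
    note core' = core[OF assms(1) fin False cpos Rm Rnn ind Um indU B \<kappa>pos less_imp_le[OF eps(1)] slope_ok]
    show "(\<forall>\<pi>. adaptive_policy M R N c B Mu U (N - S) \<pi> \<longrightarrow>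
          1 - \<epsilon> \<le> measure M {\<omega> \<in> space M. (\<Sum>i\<in>selected N \<pi> (U \<omega>) (\<lambda>i. R i \<omega>). R i \<omega>) < \<kappa>}) \<and>
          (\<forall>\<pi>. adaptive_policy M R N c B Mu U N \<pi> \<longrightarrow>
          measure M {\<omega> \<in> space M. \<kappa> \<le> (\<Sum>i\<in>selected N \<pi> (U \<omega>) (\<lambda>i. R i \<omega>) - S. R i \<omega>)} \<le> \<epsilon>)"
    proof (intro conjI allI impI)
      fix \<pi> assume p: "adaptive_policy M R N c B Mu U (N - S) \<pi>"
      have pick: "\<forall>u h i. \<pi> u h = Some i \<longrightarrow> i \<in> N - S" using p unfolding adaptive_policy_def by blast
      define A where "A = {\<omega> \<in> space M. \<kappa> \<le> (\<Sum>i\<in>selected N \<pi> (U \<omega>) (\<lambda>i. R i \<omega>) - S. R i \<omega>)}"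
      have cA: "A \<in> sets M" "measure M A \<le> \<epsilon>" using core'[OF weak[OF p]] unfolding A_def by auto
      have "{\<omega> \<in> space M. (\<Sum>i\<in>selected N \<pi> (U \<omega>) (\<lambda>i. R i \<omega>). R i \<omega>) < \<kappa>} = space M - A"
      proof -
        have "selected N \<pi> u r - S = selected N \<pi> u r" for u r
          using sel_subset[OF pick, of N u r] by auto
        then show ?thesis unfolding A_def by auto
      qed
      then show "1 - \<epsilon> \<le> measure M {\<omega> \<in> space M. (\<Sum>i\<in>selected N \<pi> (U \<omega>) (\<lambda>i. R i \<omega>). R i \<omega>) < \<kappa>}"
        using prob_compl[OF cA(1)] cA(2) by simp
    next
      fix \<pi> assume p: "adaptive_policy M R N c B Mu U N \<pi>"
      show "measure M {\<omega> \<in> space M. \<kappa> \<le> (\<Sum>i\<in>selected N \<pi> (U \<omega>) (\<lambda>i. R i \<omega>) - S. R i \<omega>)} \<le> \<epsilon>"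
        using core'[OF p] by auto
    qed
  qed
qed

end
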